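(* Let $\mathscr{H}$ be a complex Hilbert space and $A\in\mathbb{B}(\mathscr{H})$. Then $$\frac{1}{4}\, w^2\left(|A|+i|A^*|\right)+\frac{1}{8}\left\||A|^2+|A^*|^2\right\|+\frac{1}{4}\,w\left(|A||A^*|\right)\leq \frac{1}{2}\left\|A^*A+AA^*\right\|.$$
   Context: $\mathbb{B}(\mathscr{H})$ denotes the algebra of bounded linear operators on $\mathscr{H}$; $\|\cdot\|$ is the operator norm. For $T\in\mathbb{B}(\mathscr{H})$, $|T|=(T^*T)^{1/2}$, and $w(T)=\sup\{|\langle Tx,x\rangle|: \|x\|=1\}$ is the numerical radius. *)

theory Defs
  imports "HOL-Analysis.Analysis"
begin

class complex_inner = real_normed_vector +
  fixes scaleC :: "complex \<Rightarrow> 'a \<Rightarrow> 'a"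
    and cinner :: "'a \<Rightarrow> 'a \<Rightarrow> complex"
  assumes scaleC_add_right: "scaleC a (x + y) = scaleC a x + scaleC a y"
    and scaleC_add_left: "scaleC (a + b) x = scaleC a x + scaleC b x"
    and scaleC_scaleC: "scaleC a (scaleC b x) = scaleC (a * b) x"
    and scaleC_one: "scaleC 1 x = x"
    and scaleR_scaleC: "scaleR r x = scaleC (complex_of_real r) x"
    and cinner_commute: "cinner x y = cnj (cinner y x)"
    and cinner_add_left: "cinner (x + y) z = cinner x z + cinner y z"
    and cinner_scaleC_left: "cinner (scaleC c x) y = c * cinner x y"
    and cinner_self_real: "Im (cinner x x) = 0"
    and cinner_self_nonneg: "0 \<le> Re (cinner x x)"
    and cinner_self_eq_zero: "cinner x x = 0 \<longleftrightarrow> x = 0"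
    and norm_eq_sqrt_cinner: "norm x = sqrt (Re (cinner x x))"

class chilbert_space = complex_inner + complete_space

definition bounded_clinear :: "('a::complex_inner \<Rightarrow> 'b::complex_inner) \<Rightarrow> bool" where
  "bounded_clinear T \<longleftrightarrow> bounded_linear T \<and> (\<forall>c x. T (scaleC c x) = scaleC c (T x))"

definition adj :: "('a::chilbert_space \<Rightarrow> 'a) \<Rightarrow> ('a \<Rightarrow> 'a)" where
  "adj T = (THE S. bounded_clinear S \<and> (\<forall>x y. cinner (T x) y = cinner x (S y)))"

definition positive_op :: "('a::chilbert_space \<Rightarrow> 'a) \<Rightarrow> bool" where
  "positive_op S \<longleftrightarrow> bounded_clinear S \<and> (\<forall>x. Im (cinner (S x) x) = 0 \<and> 0 \<le> Re (cinner (S x) x))"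

definition absop :: "('a::chilbert_space \<Rightarrow> 'a) \<Rightarrow> ('a \<Rightarrow> 'a)" where
  "absop T = (THE S. positive_op S \<and> S \<circ> S = adj T \<circ> T)"

text \<open>Numerical radius w(T) = sup {|<Tx,x>| : ||x|| = 1}, written as a supremum of
  |<Tx,x>| / ||x||^2 over all x (value 0 at x = 0), in the style of onorm.\<close>
definition numrad :: "('a::chilbert_space \<Rightarrow> 'a) \<Rightarrow> real" where
  "numrad T = (SUP x. cmod (cinner (T x) x) / (norm x)\<^sup>2)"

end

theory Submission
  imports Defs
begin


lemma cinner_add_right: "cinner (x::'a::complex_inner) (y + z) = cinner x y + cinner x z"
  by (simp add: cinner_commute[of x "y+z"] cinner_commute[of x y] cinner_commute[of x z] cinner_add_left)
lemma cinner_scaleC_right: "cinner (x::'a::complex_inner) (scaleC c y) = cnj c * cinner x y"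
  by (simp add: cinner_commute[of x "scaleC c y"] cinner_commute[of x y] cinner_scaleC_left)
lemma cinner_zero_left[simp]: "cinner (0::'a::complex_inner) y = 0"
  using cinner_add_left[of "0::'a" 0 y] by simp
lemma cinner_zero_right[simp]: "cinner (x::'a::complex_inner) 0 = 0"
  using cinner_add_right[of x "0::'a" 0] by simp
lemma cinner_minus_left: "cinner (- x::'a::complex_inner) y = - cinner x y"
proof -
  have "cinner x y + cinner (-x) y = 0" using cinner_add_left[of x "-x" y] by simp
  thus ?thesis by (simp add: add_eq_0_iff2)
qed
lemma cinner_minus_right: "cinner (x::'a::complex_inner) (- y) = - cinner x y"
proof -
  have "cinner x y + cinner x (-y) = 0" using cinner_add_right[of x y "-y"] by simp
  thus ?thesis by (simp add: add_eq_0_iff2)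
qed
lemma cinner_diff_left: "cinner (x - y::'a::complex_inner) z = cinner x z - cinner y z"
  using cinner_add_left[of x "-y" z] by (simp add: cinner_minus_left)
lemma cinner_diff_right: "cinner (x::'a::complex_inner) (y - z) = cinner x y - cinner x z"
  using cinner_add_right[of x y "-z"] by (simp add: cinner_minus_right)
lemma cinner_scaleR_left: "cinner (r *\<^sub>R (x::'a::complex_inner)) y = of_real r * cinner x y"
  by (simp add: scaleR_scaleC cinner_scaleC_left)
lemma cinner_scaleR_right: "cinner (x::'a::complex_inner) (r *\<^sub>R y) = of_real r * cinner x y"
  by (simp add: scaleR_scaleC cinner_scaleC_right)

lemmas cinner_simps = cinner_add_left cinner_add_right cinner_diff_left cinner_diff_right
  cinner_minus_left cinner_minus_right cinner_scaleC_left cinner_scaleC_right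
  cinner_scaleR_left cinner_scaleR_right

lemma cinner_self: "cinner (x::'a::complex_inner) x = of_real ((norm x)^2)"
proof (rule complex_eqI)
  show "Re (cinner x x) = Re (of_real ((norm x)^2))"
    using cinner_self_nonneg[of x] by (simp add: norm_eq_sqrt_cinner)
qed (simp add: cinner_self_real)

lemma Re_cinner_self: "Re (cinner (x::'a::complex_inner) x) = (norm x)^2"
  by (simp add: cinner_self)

lemma cinner_ext: "(\<And>z. cinner (x::'a::complex_inner) z = cinner y z) \<Longrightarrow> x = y"
proof -
  assume h: "\<And>z. cinner x z = cinner y z"
  have "cinner (x - y) (x - y) = 0" by (simp add: cinner_diff_left h)
  thus "x = y" by (simp add: cinner_self_eq_zero)
qed

lemma scaleC_zero_right[simp]: "scaleC c (0::'a::complex_inner) = 0"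
  using scaleC_add_right[of c "0::'a" 0] by simp
lemma scaleC_zero_left[simp]: "scaleC 0 (x::'a::complex_inner) = 0"
  using scaleC_add_left[of 0 0 x] by simp

lemma norm_scaleC: "norm (scaleC c (x::'a::complex_inner)) = cmod c * norm x"
proof -
  have "complex_of_real ((norm (scaleC c x))^2) = c * (cnj c * of_real ((norm x)^2))"
    using cinner_scaleC_left[of c x "scaleC c x"] cinner_scaleC_right[of x c x]
    by (simp only: cinner_self)
  also have "\<dots> = of_real ((cmod c * norm x)^2)"
    by (simp only: mult.assoc[symmetric] complex_norm_square[symmetric] power_mult_distrib of_real_mult of_real_power)
  finally have "(norm (scaleC c x))^2 = (cmod c * norm x)^2" using of_real_eq_iff by blast
  thus ?thesis by (simp add: power2_eq_imp_eq)
qed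

lemma cauchy_schwarz: "cmod (cinner (x::'a::complex_inner) y) \<le> norm x * norm y"
proof (cases "y = 0")
  case True thus ?thesis by simp
next
  case False
  define a where "a = cinner x y"
  define n where "n = (norm y)^2"
  have n0: "n > 0" using False by (simp add: n_def)
  define t where "t = a / of_real n"
  have yy: "cinner y y = of_real n" by (simp add: n_def cinner_self)
  have yx: "cinner y x = cnj a" by (simp add: a_def cinner_commute[of y x])
  have "0 \<le> Re (cinner (x - scaleC t y) (x - scaleC t y))" by (rule cinner_self_nonneg)
  also have "cinner (x - scaleC t y) (x - scaleC t y) = cinner x x - cnj t * a - t * cnj a + t * cnj t * of_real n"
    by (simp add: cinner_diff_left cinner_diff_right cinner_scaleC_left cinner_scaleC_right yy yx flip: a_def)
       (simp add: algebra_simps)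
  also have "\<dots> = cinner x x - of_real ((cmod a)^2 / n)"
  proof -
    have e: "a * cnj a = of_real ((cmod a)^2)" by (simp add: complex_norm_square[symmetric])
    have nn: "complex_of_real n \<noteq> 0" using n0 by simp
    have "cnj t * a = a * cnj a / of_real n" by (simp add: t_def)
    moreover have "t * cnj a = a * cnj a / of_real n" by (simp add: t_def)
    moreover have "t * cnj t * of_real n = a * cnj a / of_real n" using nn by (simp add: t_def field_simps)
    ultimately show ?thesis by (simp add: e)
  qed
  finally have "(cmod a)^2 / n \<le> (norm x)^2" by (simp add: cinner_self)
  hence "(cmod a)^2 \<le> (norm x)^2 * n" using n0 by (simp add: field_simps)
  hence "(cmod a)^2 \<le> (norm x * norm y)^2" by (simp add: n_def power_mult_distrib)
  thus ?thesis unfolding a_def by (rule power2_le_imp_le) simp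
qed



definition clin :: "('a::complex_inner \<Rightarrow> 'a) \<Rightarrow> bool" where
  "clin T \<longleftrightarrow> (\<forall>x y. T (x + y) = T x + T y) \<and> (\<forall>c x. T (scaleC c x) = scaleC c (T x))"

lemma scaleC_diff_right: "scaleC c (a - b) = scaleC c a - scaleC c (b::'a::complex_inner)"
  using scaleC_add_right[of c "a - b" b] by simp

lemma clinD:
  assumes "clin T"
  shows clin_add: "T (x + y) = T x + T y" and clin_scaleC: "T (scaleC c x) = scaleC c (T x)"
  using assms unfolding clin_def by auto

lemma clin_zero: "clin T \<Longrightarrow> T 0 = 0"
  using clin_add[of T 0 0] by simp
lemma clin_minus: "clin T \<Longrightarrow> T (- x) = - T x"
  using clin_add[of T x "-x"] clin_zero[of T] by (simp add: add_eq_0_iff2)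
lemma clin_diff: "clin T \<Longrightarrow> T (x - y) = T x - T y"
  using clin_add[of T x "-y"] clin_minus[of T y] by simp
lemma clin_scaleR: "clin T \<Longrightarrow> T (r *\<^sub>R x) = r *\<^sub>R T x"
  by (simp add: scaleR_scaleC clin_scaleC)

lemma bcl_clin: "bounded_clinear T \<Longrightarrow> clin T"
  unfolding bounded_clinear_def clin_def using linear_add bounded_linear.linear by blast

lemma bcl_bl: "bounded_clinear T \<Longrightarrow> bounded_linear T"
  unfolding bounded_clinear_def by blast

lemma clin_bcl:
  assumes "clin (T::'a::complex_inner \<Rightarrow> 'a)" "\<And>x. norm (T x) \<le> K * norm x"
  shows "bounded_clinear T"
proof -
  have "bounded_linear T"
    by (rule bounded_linear_intro[where K=K]) (use assms in \<open>auto simp: clin_add clin_scaleR mult.commute\<close>)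
  thus ?thesis using assms(1) unfolding bounded_clinear_def clin_def by blast
qed

lemma bcl_bound: "bounded_clinear T \<Longrightarrow> norm (T x) \<le> onorm T * norm x"
  by (rule onorm) (rule bcl_bl)

lemma bl_scaleC: "bounded_linear (scaleC c :: 'a::complex_inner \<Rightarrow> 'a)"
proof (rule bounded_linear_intro[where K="cmod c"])
  fix r x show "scaleC c (r *\<^sub>R (x::'a)) = r *\<^sub>R scaleC c x"
    by (simp add: scaleR_scaleC scaleC_scaleC mult.commute)
qed (simp_all add: scaleC_add_right norm_scaleC mult.commute)

lemma bl_cinner_left: "bounded_linear (\<lambda>v::'a::complex_inner. cinner v y)"
proof (rule bounded_linear_intro[where K="norm y"])
  fix x show "cmod (cinner x y) \<le> norm x * norm y" by (rule cauchy_schwarz)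
qed (simp_all add: cinner_add_left cinner_scaleR_left scaleR_conv_of_real)

lemma bl_cinner_right: "bounded_linear (\<lambda>v::'a::complex_inner. cinner y v)"
proof (rule bounded_linear_intro[where K="norm y"])
  fix x show "cmod (cinner y x) \<le> norm x * norm y" using cauchy_schwarz[of y x] by (simp add: mult.commute)
qed (simp_all add: cinner_add_right cinner_scaleR_right scaleR_conv_of_real)

lemma cinner_ext_right: "(\<And>z. cinner z (x::'a::complex_inner) = cinner z y) \<Longrightarrow> x = y"
  by (rule cinner_ext) (metis cinner_commute)

lemma parallelogram:
  "(norm (x + y))^2 + (norm (x - y))^2 = 2 * (norm (x::'a::complex_inner))^2 + 2 * (norm y)^2"
proof -
  have "cinner (x + y) (x + y) + cinner (x - y) (x - y) = 2 * cinner x x + 2 * cinner y y"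
    by (simp add: cinner_add_left cinner_add_right cinner_diff_left cinner_diff_right)
  hence "complex_of_real ((norm (x + y))^2 + (norm (x - y))^2) = of_real (2 * (norm x)^2 + 2 * (norm y)^2)"
    by (simp add: cinner_self)
  thus ?thesis using of_real_eq_iff by blast
qed



lemma riesz:
  fixes f :: "'a::chilbert_space \<Rightarrow> complex"
  assumes add: "\<And>x y. f (x + y) = f x + f y"
    and sc: "\<And>c x. f (scaleC c x) = c * f x"
    and bd: "\<And>x. cmod (f x) \<le> K * norm x"
  shows "\<exists>w. \<forall>x. f x = cinner x w"
proof (cases "\<forall>x. f x = 0")
  case True thus ?thesis by (intro exI[of _ 0]) simp
next
  case False
  then obtain x0 where x0: "f x0 \<noteq> 0" by blast
  have f0: "f 0 = 0" using add[of 0 0] by simp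
  have fdiff: "f (a - b) = f a - f b" for a b using add[of "a - b" b] by simp
  have fR: "f (r *\<^sub>R a) = of_real r * f a" for r a by (simp add: scaleR_scaleC sc)
  have blf: "bounded_linear f"
    by (rule bounded_linear_intro[where K=K]) (auto simp: add fR scaleR_conv_of_real bd mult.commute)
  define M where "M = {x. f x = 1}"
  have u0: "scaleC (inverse (f x0)) x0 \<in> M" using x0 by (simp add: M_def sc)
  define d where "d = Inf (norm ` M)"
  have ne: "norm ` M \<noteq> {}" using u0 by blast
  have bb: "bdd_below (norm ` M)" by (rule bdd_belowI[of _ 0]) auto
  have dle: "d \<le> norm y" if "y \<in> M" for y unfolding d_def using bb that by (auto intro: cInf_lower)
  have d0: "0 \<le> d" unfolding d_def using ne by (auto intro: cInf_greatest)
  have "\<forall>n. \<exists>x. x \<in> M \<and> norm x < d + inverse (real (Suc n))"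
  proof
    fix n
    have "Inf (norm ` M) < d + inverse (real (Suc n))" by (simp add: d_def)
    then obtain v where "v \<in> norm ` M" "v < d + inverse (real (Suc n))"
      using cInf_less_iff[OF ne bb] by blast
    thus "\<exists>x. x \<in> M \<and> norm x < d + inverse (real (Suc n))" by blast
  qed
  then obtain xs where xs: "\<And>n. xs n \<in> M" "\<And>n. norm (xs n) < d + inverse (real (Suc n))"
    by metis
  have mid: "2 * d \<le> norm (xs m + xs n)" for m n
  proof -
    have "scaleR (1/2) (xs m + xs n) \<in> M"
      using xs(1)[of m] xs(1)[of n] by (simp add: M_def fR add)
    hence "d \<le> norm (scaleR (1/2) (xs m + xs n))" by (rule dle)
    thus ?thesis by simp
  qed
  have key: "(norm (xs m - xs n))^2 \<le> 4 * d * inverse (real (Suc m)) + 2 * (inverse (real (Suc m)))^2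
     + 4 * d * inverse (real (Suc n)) + 2 * (inverse (real (Suc n)))^2" for m n
  proof -
    define em where "em = inverse (real (Suc m))"
    define en where "en = inverse (real (Suc n))"
    have a: "norm (xs m) \<le> d + em" "norm (xs n) \<le> d + en" using xs(2)[of m] xs(2)[of n] em_def en_def by auto
    have a2: "(norm (xs m))^2 \<le> (d + em)^2" "(norm (xs n))^2 \<le> (d + en)^2"
      using a by (auto intro!: power_mono)
    have b: "(2 * d)^2 \<le> (norm (xs m + xs n))^2" using power_mono[OF mid[of m n], of 2] d0 by simp
    have "(norm (xs m - xs n))^2 = 2 * (norm (xs m))^2 + 2 * (norm (xs n))^2 - (norm (xs m + xs n))^2"
      using parallelogram[of "xs m" "xs n"] by simp
    also have "\<dots> \<le> 2 * (d + em)^2 + 2 * (d + en)^2 - (2 * d)^2" using a2 b by simp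
    also have "\<dots> = 4 * d * em + 2 * em^2 + 4 * d * en + 2 * en^2" by (simp add: power2_eq_square algebra_simps)
    finally show ?thesis by (simp add: em_def en_def)
  qed
  have "Cauchy xs"
  proof (rule CauchyI)
    fix e :: real assume e: "0 < e"
    have "0 < e^2 / (8 * d + 4)" using e d0 by simp
    then obtain N where N: "inverse (real (Suc N)) < e^2 / (8 * d + 4)" using reals_Archimedean by blast
    show "\<exists>N. \<forall>m\<ge>N. \<forall>n\<ge>N. norm (xs m - xs n) < e"
    proof (intro exI allI impI)
      fix m n assume mn: "N \<le> m" "N \<le> n"
      define eN where "eN = inverse (real (Suc N))"
      have eN0: "0 < eN" by (auto simp: eN_def)
      have em: "inverse (real (Suc m)) \<le> eN" "inverse (real (Suc n)) \<le> eN"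
        using mn by (auto simp: eN_def intro!: le_imp_inverse_le)
      have em2: "(inverse (real (Suc m)))^2 \<le> eN" "(inverse (real (Suc n)))^2 \<le> eN"
      proof -
        have "(inverse (real (Suc m)))^2 \<le> inverse (real (Suc m))"
          by (simp add: power2_eq_square mult_le_cancel_left1 inverse_le_1_iff)
        thus "(inverse (real (Suc m)))^2 \<le> eN" using em by linarith
        have "(inverse (real (Suc n)))^2 \<le> inverse (real (Suc n))"
          by (simp add: power2_eq_square mult_le_cancel_left1 inverse_le_1_iff)
        thus "(inverse (real (Suc n)))^2 \<le> eN" using em by linarith
      qed
      have "(norm (xs m - xs n))^2 \<le> (8 * d + 4) * eN"
      proof -
        have "4 * d * inverse (real (Suc m)) \<le> 4 * d * eN" using em d0 by (simp add: mult_left_mono)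
        moreover have "4 * d * inverse (real (Suc n)) \<le> 4 * d * eN" using em d0 by (simp add: mult_left_mono)
        ultimately show ?thesis using key[of m n] em2 by (simp add: algebra_simps)
      qed
      also have "\<dots> < e^2" using N d0 by (simp add: eN_def field_simps)
      finally have "(norm (xs m - xs n))^2 < e^2" .
      thus "norm (xs m - xs n) < e" using e by (simp add: power_less_imp_less_base)
    qed
  qed
  then obtain z where z: "xs \<longlonglongrightarrow> z" using Cauchy_convergent convergent_def by blast
  have fz: "f z = 1"
  proof -
    have "(\<lambda>n. f (xs n)) \<longlonglongrightarrow> f z" by (rule bounded_linear.tendsto[OF blf z])
    moreover have "(\<lambda>n. f (xs n)) = (\<lambda>n. 1)" using xs(1) by (simp add: M_def)
    ultimately have "(\<lambda>n. 1::complex) \<longlonglongrightarrow> f z" by simp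
    from LIMSEQ_unique[OF tendsto_const this] show ?thesis by simp
  qed
  have zmin: "norm z \<le> norm y" if "y \<in> M" for y
  proof -
    have "norm z \<le> d"
    proof (rule LIMSEQ_le)
      show "(\<lambda>n. norm (xs n)) \<longlonglongrightarrow> norm z" by (rule tendsto_norm[OF z])
      show "(\<lambda>n. d + inverse (real (Suc n))) \<longlonglongrightarrow> d"
        using tendsto_add[OF tendsto_const LIMSEQ_inverse_real_of_nat, of d] by simp
      show "\<exists>N. \<forall>n\<ge>N. norm (xs n) \<le> d + inverse (real (Suc n))" using xs(2) less_imp_le by blast
    qed
    thus ?thesis using dle[OF that] by linarith
  qed
  have orth: "cinner v z = 0" if fv: "f v = 0" for v
  proof -
    define a where "a = cinner v z"
    define q where "q = (cmod a)^2"
    define nv where "nv = (norm v)^2"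
    define s where "s = 1 / (nv + 1)"
    have nv0: "0 \<le> nv" by (simp add: nv_def)
    have s0: "0 < s" using nv0 by (simp add: s_def)
    have snv: "s * nv < 1" using nv0 by (simp add: s_def field_simps)
    define t where "t = - (of_real s * cnj a)"
    have inM: "z + scaleC t v \<in> M" using fz fv by (simp add: M_def add sc)
    have "(norm z)^2 \<le> (norm (z + scaleC t v))^2" using zmin[OF inM] by (simp add: power_mono)
    also have "complex_of_real ((norm (z + scaleC t v))^2) = of_real ((norm z)^2 + (-2 * s * q + s^2 * q * nv))"
    proof -
      have aa: "a * cnj a = of_real q" by (simp add: q_def complex_norm_square[symmetric])
      have zv: "cinner z v = cnj a" by (simp add: a_def cinner_commute[of z v])
      have "complex_of_real ((norm (z + scaleC t v))^2) = cinner (z + scaleC t v) (z + scaleC t v)"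
        by (simp add: cinner_self)
      also have "\<dots> = cinner z z + cnj t * cnj a + t * a + t * cnj t * cinner v v"
        by (simp add: cinner_add_left cinner_add_right cinner_scaleC_left cinner_scaleC_right zv
            flip: a_def) (simp add: algebra_simps)
      also have "\<dots> = cinner z z + of_real (-2 * s * q + s^2 * q * nv)"
        by (simp add: t_def cinner_self nv_def algebra_simps power2_eq_square aa[symmetric])
      finally show ?thesis by (simp add: cinner_self)
    qed
    hence "(norm (z + scaleC t v))^2 = (norm z)^2 + (-2 * s * q + s^2 * q * nv)"
      using of_real_eq_iff by blast
    finally have "0 \<le> s * q * (s * nv - 2)" by (simp add: algebra_simps power2_eq_square)
    moreover have "s * nv - 2 < 0" using snv by simp
    ultimately have "s * q \<le> 0" by (metis leD leI mult_pos_neg)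
    hence "q \<le> 0" using s0 by (simp add: mult_le_0_iff)
    hence "q = 0" by (simp add: q_def)
    thus ?thesis by (simp add: q_def a_def)
  qed
  have z0: "cinner z z \<noteq> 0" using fz f0 by (auto simp: cinner_self_eq_zero)
  show ?thesis
  proof (intro exI allI)
    fix x
    have "f (x - scaleC (f x) z) = 0" by (simp add: fdiff sc fz)
    hence "cinner (x - scaleC (f x) z) z = 0" by (rule orth)
    hence xz: "cinner x z = f x * cinner z z" by (simp add: cinner_diff_left cinner_scaleC_left)
    show "f x = cinner x (scaleC (inverse (cnj (cinner z z))) z)"
      using z0 by (simp add: cinner_scaleC_right xz)
  qed
qed



lemma adj_exists:
  fixes A :: "'a::chilbert_space \<Rightarrow> 'a"
  assumes A: "bounded_clinear A"
  shows "\<exists>S. bounded_clinear S \<and> (\<forall>x y. cinner (A x) y = cinner x (S y))"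
proof -
  have cA: "clin A" by (rule bcl_clin[OF A])
  have "\<forall>y. \<exists>w. \<forall>x. cinner (A x) y = cinner x w"
  proof
    fix y
    show "\<exists>w. \<forall>x. cinner (A x) y = cinner x w"
    proof (rule riesz[where K="onorm A * norm y"])
      fix x x' show "cinner (A (x + x')) y = cinner (A x) y + cinner (A x') y"
        by (simp add: clin_add[OF cA] cinner_add_left)
    next
      fix c x show "cinner (A (scaleC c x)) y = c * cinner (A x) y"
        by (simp add: clin_scaleC[OF cA] cinner_scaleC_left)
    next
      fix x
      have "cmod (cinner (A x) y) \<le> norm (A x) * norm y" by (rule cauchy_schwarz)
      also have "\<dots> \<le> onorm A * norm x * norm y"
        by (rule mult_right_mono[OF bcl_bound[OF A]]) simp
      finally show "cmod (cinner (A x) y) \<le> onorm A * norm y * norm x" by (simp add: algebra_simps)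
    qed
  qed
  then obtain S where S: "\<And>x y. cinner (A x) y = cinner x (S y)" by metis
  have cS: "clin S" unfolding clin_def
  proof (intro conjI allI)
    fix y y' show "S (y + y') = S y + S y'"
      by (rule cinner_ext_right) (simp add: cinner_add_right S[symmetric])
  next
    fix c y show "S (scaleC c y) = scaleC c (S y)"
      by (rule cinner_ext_right) (simp add: cinner_scaleC_right S[symmetric])
  qed
  have "norm (S y) \<le> onorm A * norm y" for y
  proof (cases "S y = 0")
    case True thus ?thesis using onorm_pos_le[OF bcl_bl[OF A]] by simp
  next
    case False
    have "(norm (S y))^2 = Re (cinner (A (S y)) y)" by (simp add: S Re_cinner_self)
    also have "\<dots> \<le> cmod (cinner (A (S y)) y)" by (rule complex_Re_le_cmod)
    also have "\<dots> \<le> norm (A (S y)) * norm y" by (rule cauchy_schwarz)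
    also have "\<dots> \<le> onorm A * norm (S y) * norm y"
      by (rule mult_right_mono[OF bcl_bound[OF A]]) simp
    finally have "norm (S y) * norm (S y) \<le> (onorm A * norm y) * norm (S y)"
      by (simp add: power2_eq_square algebra_simps)
    thus ?thesis using False by simp
  qed
  hence "bounded_clinear S" by (intro clin_bcl[OF cS])
  thus ?thesis using S by blast
qed

lemma adj_unique:
  fixes A :: "'a::chilbert_space \<Rightarrow> 'a"
  assumes "\<forall>x y. cinner (A x) y = cinner x (S y)" "\<forall>x y. cinner (A x) y = cinner x (S' y)"
  shows "S = S'"
proof
  fix y show "S y = S' y" by (rule cinner_ext_right) (metis assms)
qed

lemma adj_prop:
  fixes A :: "'a::chilbert_space \<Rightarrow> 'a"
  assumes A: "bounded_clinear A"
  shows "bounded_clinear (adj A) \<and> (\<forall>x y. cinner (A x) y = cinner x (adj A y))"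
proof -
  obtain S where S: "bounded_clinear S" "\<forall>x y. cinner (A x) y = cinner x (S y)"
    using adj_exists[OF A] by blast
  have "adj A = S" unfolding adj_def
    by (rule the_equality) (use S adj_unique in blast)+
  thus ?thesis using S by simp
qed

lemma adj_bcl: "bounded_clinear A \<Longrightarrow> bounded_clinear (adj (A::'a::chilbert_space \<Rightarrow> 'a))"
  using adj_prop by blast
lemma adj_right: "bounded_clinear A \<Longrightarrow> cinner (A x) y = cinner x (adj (A::'a::chilbert_space \<Rightarrow> 'a) y)"
  using adj_prop by blast
lemma adj_left: "bounded_clinear A \<Longrightarrow> cinner (adj A x) y = cinner x ((A::'a::chilbert_space \<Rightarrow> 'a) y)"
  by (metis adj_right cinner_commute)

lemma adj_adj:
  fixes A :: "'a::chilbert_space \<Rightarrow> 'a"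
  assumes A: "bounded_clinear A"
  shows "adj (adj A) = A"
proof -
  have "\<forall>x y. cinner (adj A x) y = cinner x (A y)" using adj_left[OF A] by blast
  moreover have "\<forall>x y. cinner (adj A x) y = cinner x (adj (adj A) y)" using adj_prop[OF adj_bcl[OF A]] by blast
  ultimately show ?thesis using adj_unique by metis
qed



definition herm :: "('a::complex_inner \<Rightarrow> 'a) \<Rightarrow> bool" where
  "herm T \<longleftrightarrow> (\<forall>x y. cinner (T x) y = cinner x (T y))"

definition posop :: "('a::complex_inner \<Rightarrow> 'a) \<Rightarrow> bool" where
  "posop T \<longleftrightarrow> bounded_clinear T \<and> herm T \<and> (\<forall>x. 0 \<le> Re (cinner (T x) x))"

lemma hermD: "herm T \<Longrightarrow> cinner (T x) y = cinner x (T y)"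
  unfolding herm_def by blast

lemma herm_real: "herm T \<Longrightarrow> Im (cinner (T x) x) = 0"
proof -
  assume h: "herm T"
  have "cinner (T x) x = cnj (cinner (T x) x)"
    using hermD[OF h, of x x] cinner_commute[of x "T x"] by simp
  hence "Im (cinner (T x) x) = Im (cnj (cinner (T x) x))" by (rule arg_cong)
  thus ?thesis by simp
qed

lemma positive_op_posop:
  fixes S :: "'a::chilbert_space \<Rightarrow> 'a"
  shows "positive_op S \<longleftrightarrow> posop S"
proof
  assume p: "positive_op S"
  hence bc: "bounded_clinear S" and im: "\<And>x. Im (cinner (S x) x) = 0"
    and re: "\<And>x. 0 \<le> Re (cinner (S x) x)" unfolding positive_op_def by auto
  have cS: "clin S" by (rule bcl_clin[OF bc])
  have "herm S" unfolding herm_def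
  proof (intro allI)
    fix x y
    define a where "a = cinner (S x) y"
    define b where "b = cinner (S y) x"
    have "Im (cinner (S (x + y)) (x + y)) = 0" by (rule im)
    hence 1: "Im a + Im b = 0"
      using im[of x] im[of y] by (simp add: clin_add[OF cS] cinner_add_left cinner_add_right a_def b_def)
    have "Im (cinner (S (x + scaleC \<i> y)) (x + scaleC \<i> y)) = 0" by (rule im)
    hence 2: "Re b - Re a = 0"
      using im[of x] im[of y]
      by (simp add: clin_add[OF cS] clin_scaleC[OF cS] cinner_add_left cinner_add_right
          cinner_scaleC_left cinner_scaleC_right a_def b_def)
    have "b = cnj a" using 1 2 by (simp add: complex_eq_iff)
    thus "cinner (S x) y = cinner x (S y)"
      by (simp add: a_def b_def cinner_commute[of x "S y"])
  qed
  thus "posop S" using bc re by (simp add: posop_def)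
next
  assume "posop S"
  thus "positive_op S" unfolding posop_def positive_op_def using herm_real by blast
qed

lemma DD:
  fixes D :: "'a::complex_inner \<Rightarrow> 'a"
  assumes c: "clin D" and h: "herm D" and nn: "\<And>z. 0 \<le> Re (cinner (D z) z)"
    and le: "\<And>z. Re (cinner (D z) z) \<le> (norm z)^2"
  shows "(norm (D x))^2 \<le> Re (cinner (D x) x)"
proof -
  define u where "u = D x"
  have h1: "0 \<le> Re (cinner (D (x - u)) (x - u))" by (rule nn)
  have h2: "Re (cinner (D u) u) \<le> (norm u)^2" by (rule le)
  have e1: "cinner (D x) u = of_real ((norm u)^2)" by (simp add: u_def cinner_self)
  have e2: "cinner (D u) x = of_real ((norm u)^2)" by (simp add: hermD[OF h] u_def cinner_self)
  have "cinner (D (x - u)) (x - u) = cinner (D x) x - cinner (D x) u - cinner (D u) x + cinner (D u) u"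
    by (simp add: clin_diff[OF c] cinner_diff_left cinner_diff_right)
  hence "Re (cinner (D (x - u)) (x - u)) = Re (cinner (D x) x) - 2 * (norm u)^2 + Re (cinner (D u) u)"
    by (simp add: e1 e2)
  thus ?thesis using h1 h2 by (simp add: u_def)
qed

lemma posop_kill:
  fixes S :: "'a::complex_inner \<Rightarrow> 'a"
  assumes p: "posop S" and z: "Re (cinner (S y) y) = 0"
  shows "S y = 0"
proof -
  have bc: "bounded_clinear S" and h: "herm S" and nn: "\<And>x. 0 \<le> Re (cinner (S x) x)"
    using p by (auto simp: posop_def)
  have cS: "clin S" by (rule bcl_clin[OF bc])
  define K where "K = onorm S + 1"
  have K0: "0 < K" using onorm_pos_le[OF bcl_bl[OF bc]] by (simp add: K_def)
  define D where "D = (\<lambda>x. inverse K *\<^sub>R S x)"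
  have cD: "clin D" using cS
    by (simp add: clin_def D_def scaleR_add_right scaleC_add_right scaleR_scaleC scaleC_scaleC mult.commute)
  have hD: "herm D" using h by (simp add: herm_def D_def cinner_scaleR_left cinner_scaleR_right)
  have reD: "Re (cinner (D x) x) = inverse K * Re (cinner (S x) x)" for x
    by (simp add: D_def cinner_scaleR_left del: of_real_inverse)
  have "(norm (D y))^2 \<le> Re (cinner (D y) y)"
  proof (rule DD[OF cD hD])
    fix x show "0 \<le> Re (cinner (D x) x)" using nn[of x] K0 by (simp add: reD)
  next
    fix x
    have "Re (cinner (S x) x) \<le> cmod (cinner (S x) x)" by (rule complex_Re_le_cmod)
    also have "\<dots> \<le> norm (S x) * norm x" by (rule cauchy_schwarz)
    also have "\<dots> \<le> onorm S * norm x * norm x" by (rule mult_right_mono[OF bcl_bound[OF bc]]) simp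
    also have "\<dots> \<le> K * (norm x)^2"
      by (simp add: K_def power2_eq_square algebra_simps)
    finally show "Re (cinner (D x) x) \<le> (norm x)^2" using K0 by (simp add: reD field_simps)
  qed
  hence "D y = 0" using z by (simp add: reD)
  thus ?thesis using K0 by (simp add: D_def)
qed



inductive_set polyK :: "('a::complex_inner \<Rightarrow> 'a) \<Rightarrow> ('a \<Rightarrow> 'a) set" for C where
  pk_pow: "(C ^^ k) \<in> polyK C"
| pk_add: "P \<in> polyK C \<Longrightarrow> Q \<in> polyK C \<Longrightarrow> (\<lambda>x. P x + Q x) \<in> polyK C"
| pk_smul: "P \<in> polyK C \<Longrightarrow> 0 \<le> r \<Longrightarrow> (\<lambda>x. r *\<^sub>R P x) \<in> polyK C"

lemma clin_pow: "clin C \<Longrightarrow> clin (C ^^ k)"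
  by (induction k) (auto simp: clin_def)

lemma clin_sum: "clin P \<Longrightarrow> clin Q \<Longrightarrow> clin (\<lambda>x. P x + Q x)"
  by (simp add: clin_def scaleC_add_right algebra_simps)

lemma clin_smul: "clin P \<Longrightarrow> clin (\<lambda>x. r *\<^sub>R P x)"
  by (simp add: clin_def scaleR_add_right scaleC_add_right scaleR_scaleC scaleC_scaleC mult.commute)

lemma clin_K: assumes "clin C" "P \<in> polyK C" shows "clin P"
  using assms(2) by (induction P rule: polyK.induct) (auto intro: clin_pow[OF assms(1)] clin_sum clin_smul)

lemma comm_K:
  assumes cS: "clin S" and cC: "clin C" and SC: "\<And>x. S (C x) = C (S x)" and P: "P \<in> polyK C"
  shows "S (P x) = P (S x)"
  using P
proof (induction P arbitrary: x rule: polyK.induct)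
  case (pk_pow k) show ?case by (induction k arbitrary: x) (auto simp: SC)
next
  case (pk_add P Q) thus ?case by (simp add: clin_add[OF cS])
next
  case (pk_smul P r) thus ?case by (simp add: clin_scaleR[OF cS])
qed

lemma comp_K:
  assumes cC: "clin C" and P: "P \<in> polyK C" and Q: "Q \<in> polyK C"
  shows "(\<lambda>x. P (Q x)) \<in> polyK C"
  using P
proof (induction P rule: polyK.induct)
  case (pk_pow k)
  show ?case using Q
  proof (induction Q rule: polyK.induct)
    case (pk_pow j)
    have "(\<lambda>x. (C ^^ k) ((C ^^ j) x)) = C ^^ (k + j)" by (simp add: funpow_add fun_eq_iff)
    thus ?case by (simp add: polyK.pk_pow)
  next
    case (pk_add P Q)
    have "(\<lambda>x. (C ^^ k) (P x + Q x)) = (\<lambda>x. (C ^^ k) (P x) + (C ^^ k) (Q x))"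
      by (simp add: clin_add[OF clin_pow[OF cC]])
    thus ?case using pk_add by (simp add: polyK.pk_add)
  next
    case (pk_smul P r)
    have "(\<lambda>x. (C ^^ k) (r *\<^sub>R P x)) = (\<lambda>x. r *\<^sub>R (C ^^ k) (P x))"
      by (simp add: clin_scaleR[OF clin_pow[OF cC]])
    thus ?case using pk_smul by (simp add: polyK.pk_smul)
  qed
next
  case (pk_add P1 P2) thus ?case by (simp add: polyK.pk_add)
next
  case (pk_smul P r) thus ?case by (simp add: polyK.pk_smul)
qed

lemma herm_pow: "clin C \<Longrightarrow> herm C \<Longrightarrow> herm (C ^^ k)"
proof (induction k)
  case 0 thus ?case by (simp add: herm_def)
next
  case (Suc k)
  show ?case unfolding herm_def
  proof (intro allI)
    fix x y
    have "cinner ((C ^^ Suc k) x) y = cinner ((C ^^ k) x) (C y)" by (simp add: hermD[OF Suc.prems(2)])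
    also have "\<dots> = cinner x ((C ^^ k) (C y))" using Suc by (simp add: hermD)
    also have "\<dots> = cinner x ((C ^^ Suc k) y)" by (simp add: funpow_swap1)
    finally show "cinner ((C ^^ Suc k) x) y = cinner x ((C ^^ Suc k) y)" .
  qed
qed

lemma nonneg_pow:
  assumes c: "clin C" and h: "herm C" and nn: "\<And>x. 0 \<le> Re (cinner (C x) x)"
  shows "0 \<le> Re (cinner ((C ^^ k) x) x)"
proof -
  define m where "m = k div 2"
  have "k = m + m \<or> k = m + Suc m" unfolding m_def by presburger
  thus ?thesis
  proof
    assume k: "k = m + m"
    have "cinner ((C ^^ k) x) x = cinner ((C ^^ m) x) ((C ^^ m) x)"
      by (simp add: k funpow_add hermD[OF herm_pow[OF c h]])
    thus ?thesis by (simp add: cinner_self)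
  next
    assume k: "k = m + Suc m"
    have "cinner ((C ^^ k) x) x = cinner ((C ^^ m) (C x)) ((C ^^ m) x)"
      by (simp add: k funpow_add hermD[OF herm_pow[OF c h]] funpow_swap1)
    also have "\<dots> = cinner (C ((C ^^ m) x)) ((C ^^ m) x)" by (simp add: funpow_swap1)
    finally show ?thesis using nn by simp
  qed
qed

lemma pos_K:
  assumes c: "clin C" and h: "herm C" and nn: "\<And>x. 0 \<le> Re (cinner (C x) x)" and P: "P \<in> polyK C"
  shows "herm P \<and> (\<forall>x. 0 \<le> Re (cinner (P x) x))"
  using P
proof (induction P rule: polyK.induct)
  case (pk_pow k) thus ?case using herm_pow[OF c h] nonneg_pow[OF c h nn] by blast
next
  case (pk_add P Q)
  have "herm (\<lambda>x. P x + Q x)" using pk_add.IH unfolding herm_def by (simp add: cinner_add_left cinner_add_right)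
  moreover have "0 \<le> Re (cinner (P x + Q x) x)" for x
    using pk_add.IH by (simp add: cinner_add_left add_nonneg_nonneg)
  ultimately show ?case by blast
next
  case (pk_smul P r)
  have "herm (\<lambda>x. r *\<^sub>R P x)" using pk_smul.IH unfolding herm_def by (simp add: cinner_scaleR_left cinner_scaleR_right)
  moreover have "0 \<le> Re (cinner (r *\<^sub>R P x) x)" for x
    using pk_smul.IH pk_smul.hyps(2) by (simp add: cinner_scaleR_left del: of_real_inverse)
  ultimately show ?case by blast
qed



primrec sqit :: "('a::real_vector \<Rightarrow> 'a) \<Rightarrow> nat \<Rightarrow> 'a \<Rightarrow> 'a" where
  "sqit C 0 = (\<lambda>x. 0)"
| "sqit C (Suc n) = (\<lambda>x. (1/2) *\<^sub>R (C x + sqit C n (sqit C n x)))"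

locale sqctx =
  fixes C :: "'a::chilbert_space \<Rightarrow> 'a"
  assumes cC: "clin C" and hC: "herm C" and nnC: "\<And>x. 0 \<le> Re (cinner (C x) x)"
    and leC: "\<And>x. Re (cinner (C x) x) \<le> (norm x)^2"
begin

abbreviation "Y \<equiv> sqit C"

lemma pow1: "C ^^ 1 = C" by simp

lemma Ysuc: "Y (Suc n) x = (1/2) *\<^sub>R (C x + Y n (Y n x))" by simp

lemma half_diff: "p = (1/2) *\<^sub>R (c + u) \<Longrightarrow> q = (1/2) *\<^sub>R (c + v) \<Longrightarrow> p - q = (1/2) *\<^sub>R (u - v)"
  for p q c u v :: "'b::real_vector"
  by (simp add: algebra_simps)

lemma zero_K: "(\<lambda>x. 0) \<in> polyK C"
proof -
  have "(\<lambda>x. 0 *\<^sub>R (C ^^ 0) x) \<in> polyK C" by (rule pk_smul[OF pk_pow]) simp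
  thus ?thesis by simp
qed

lemma halfC_K: "(\<lambda>x. (1/2) *\<^sub>R C x) \<in> polyK C"
proof -
  have "(\<lambda>x. (1/2) *\<^sub>R (C ^^ 1) x) \<in> polyK C" by (rule pk_smul[OF pk_pow]) simp
  thus ?thesis by simp
qed

lemma Y_K: "Y n \<in> polyK C"
proof (induction n)
  case 0
  show ?case using zero_K by simp
next
  case (Suc n)
  have "(\<lambda>x. C x + Y n (Y n x)) \<in> polyK C"
    using pk_add[OF pk_pow[where k=1] comp_K[OF cC Suc Suc]] by (simp add: pow1)
  from pk_smul[OF this, of "1/2"] show ?case by simp
qed

lemma clinY: "clin (Y n)" by (rule clin_K[OF cC Y_K])

lemma commY: "Y m (Y n x) = Y n (Y m x)"
proof -
  have h: "Y k (C x) = C (Y k x)" for k x by (rule comm_K[OF cC cC _ Y_K, symmetric]) simp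
  show ?thesis by (rule comm_K[OF clinY cC h Y_K])
qed

lemma D_K: "(\<lambda>x. Y (Suc n) x - Y n x) \<in> polyK C"
proof (induction n)
  case 0
  show ?case using halfC_K by simp
next
  case (Suc n)
  define D where "D = (\<lambda>x. Y (Suc n) x - Y n x)"
  have "(\<lambda>x. Y (Suc n) x + Y n x) \<in> polyK C" by (rule pk_add[OF Y_K Y_K])
  hence "(\<lambda>x. D (Y (Suc n) x + Y n x)) \<in> polyK C" using comp_K[OF cC Suc[folded D_def]] by blast
  hence "(\<lambda>x. (1/2) *\<^sub>R D (Y (Suc n) x + Y n x)) \<in> polyK C" by (rule pk_smul) simp
  moreover have "(\<lambda>x. (1/2) *\<^sub>R D (Y (Suc n) x + Y n x)) = (\<lambda>x. Y (Suc (Suc n)) x - Y (Suc n) x)"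
  proof
    fix x
    have "D (Y (Suc n) x + Y n x) = Y (Suc n) (Y (Suc n) x) - Y n (Y n x)"
      by (simp only: D_def clin_add[OF clinY] commY[of "Suc n" n x]) (simp add: algebra_simps del: sqit.simps)
    moreover have "Y (Suc (Suc n)) x - Y (Suc n) x = (1/2) *\<^sub>R (Y (Suc n) (Y (Suc n) x) - Y n (Y n x))"
      by (rule half_diff[OF Ysuc Ysuc])
    ultimately show "(1/2) *\<^sub>R D (Y (Suc n) x + Y n x) = Y (Suc (Suc n)) x - Y (Suc n) x"
      by simp
  qed
  ultimately show ?case by simp
qed

lemma diff_K: "n \<le> m \<Longrightarrow> (\<lambda>x. Y m x - Y n x) \<in> polyK C"
proof (induction m)
  case 0
  show ?case using 0 zero_K by simp
next
  case (Suc m)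
  show ?case
  proof (cases "n = Suc m")
    case True
    show ?thesis using True zero_K by simp
  next
    case False
    hence "n \<le> m" using Suc by simp
    from pk_add[OF D_K[of m] Suc.IH[OF this]] show ?thesis by simp
  qed
qed

lemma posY: "herm (Y n) \<and> (\<forall>x. 0 \<le> Re (cinner (Y n x) x))"
  by (rule pos_K[OF cC hC nnC Y_K])

lemma normC: "norm (C x) \<le> norm x"
proof -
  have "(norm (C x))^2 \<le> Re (cinner (C x) x)" by (rule DD[OF cC hC nnC leC])
  also have "\<dots> \<le> (norm x)^2" by (rule leC)
  finally show ?thesis by (rule power2_le_imp_le) simp
qed

lemma normY: "norm (Y n x) \<le> norm x"
proof (induction n arbitrary: x)
  case 0 thus ?case by simp
next
  case (Suc n)
  have "norm (Y (Suc n) x) \<le> (1/2) * (norm (C x) + norm (Y n (Y n x)))"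
    by (simp add: norm_triangle_ineq)
  also have "\<dots> \<le> (1/2) * (norm x + norm x)"
    using normC[of x] Suc[of "Y n x"] Suc[of x] by simp
  finally show ?case by simp
qed

lemma reY_le: "Re (cinner (Y n x) x) \<le> (norm x)^2"
proof -
  have "Re (cinner (Y n x) x) \<le> cmod (cinner (Y n x) x)" by (rule complex_Re_le_cmod)
  also have "\<dots> \<le> norm (Y n x) * norm x" by (rule cauchy_schwarz)
  also have "\<dots> \<le> norm x * norm x" by (rule mult_right_mono[OF normY]) simp
  finally show ?thesis by (simp add: power2_eq_square)
qed

lemma diff_pos: "n \<le> m \<Longrightarrow> herm (\<lambda>x. Y m x - Y n x) \<and> (\<forall>x. 0 \<le> Re (cinner (Y m x - Y n x) x))"
  using pos_K[OF cC hC nnC diff_K] by blast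

lemma reY_mono: "n \<le> m \<Longrightarrow> Re (cinner (Y n x) x) \<le> Re (cinner (Y m x) x)"
  using diff_pos[of n m] by (auto simp: cinner_diff_left)

lemma step_bound:
  assumes "n \<le> m"
  shows "(norm (Y m x - Y n x))^2 \<le> Re (cinner (Y m x) x) - Re (cinner (Y n x) x)"
proof -
  let ?D = "\<lambda>x. Y m x - Y n x"
  have "(norm (?D x))^2 \<le> Re (cinner (?D x) x)"
  proof (rule DD)
    show "clin ?D" by (rule clin_K[OF cC diff_K[OF assms]])
    show "herm ?D" using diff_pos[OF assms] by blast
    show "\<And>z. 0 \<le> Re (cinner (?D z) z)" using diff_pos[OF assms] by blast
    fix z
    have "0 \<le> Re (cinner (Y n z) z)" using posY by blast
    thus "Re (cinner (?D z) z) \<le> (norm z)^2"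
      using reY_le[of m z] by (simp add: cinner_diff_left)
  qed
  thus ?thesis by (simp add: cinner_diff_left)
qed

lemma Y_cauchy: "Cauchy (\<lambda>n. Y n x)"
proof -
  define a where "a = (\<lambda>n. Re (cinner (Y n x) x))"
  have "incseq a" unfolding a_def by (rule incseq_SucI, rule reY_mono, simp)
  moreover have "\<forall>i. a i \<le> (norm x)^2" by (simp add: a_def reY_le)
  ultimately obtain L where "a \<longlonglongrightarrow> L" using incseq_convergent by blast
  hence "Cauchy a" by (intro convergent_Cauchy) (auto simp: convergent_def)
  show ?thesis
  proof (rule CauchyI)
    fix e :: real assume e: "0 < e"
    then obtain M where M: "\<forall>m\<ge>M. \<forall>n\<ge>M. norm (a m - a n) < e^2"
      using \<open>Cauchy a\<close> unfolding Cauchy_iff by (meson zero_less_power)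
    have b: "norm (Y m x - Y n x) < e" if "m \<ge> M" "n \<ge> M" "n \<le> m" for m n
    proof -
      have "(norm (Y m x - Y n x))^2 \<le> a m - a n" using step_bound[OF that(3)] by (simp add: a_def)
      also have "\<dots> < e^2"
      proof -
        have "norm (a m - a n) < e^2" using M that(1,2) by blast
        thus ?thesis by simp
      qed
      finally show ?thesis using e by (simp add: power_less_imp_less_base)
    qed
    show "\<exists>M. \<forall>m\<ge>M. \<forall>n\<ge>M. norm (Y m x - Y n x) < e"
    proof (intro exI allI impI)
      fix m n assume "M \<le> m" "M \<le> n"
      thus "norm (Y m x - Y n x) < e"
        using b[of m n] b[of n m] by (cases "n \<le> m") (auto simp: norm_minus_commute)
    qed
  qed
qed

definition Yl :: "'a \<Rightarrow> 'a" where "Yl x = lim (\<lambda>n. Y n x)"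

lemma Ylim: "(\<lambda>n. Y n x) \<longlonglongrightarrow> Yl x"
  unfolding Yl_def using Y_cauchy Cauchy_convergent convergent_LIMSEQ_iff by blast

lemma clinYl: "clin Yl"
  unfolding clin_def
proof (intro conjI allI)
  fix x y
  have "(\<lambda>n. Y n (x + y)) \<longlonglongrightarrow> Yl x + Yl y"
    using tendsto_add[OF Ylim[of x] Ylim[of y]] by (simp add: clin_add[OF clinY])
  thus "Yl (x + y) = Yl x + Yl y" using LIMSEQ_unique Ylim by blast
next
  fix c x
  have "(\<lambda>n. Y n (scaleC c x)) \<longlonglongrightarrow> scaleC c (Yl x)"
    using bounded_linear.tendsto[OF bl_scaleC Ylim[of x], of c] by (simp add: clin_scaleC[OF clinY])
  thus "Yl (scaleC c x) = scaleC c (Yl x)" using LIMSEQ_unique Ylim by blast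
qed

lemma normYl: "norm (Yl x) \<le> norm x"
  by (rule LIMSEQ_le_const2[OF tendsto_norm[OF Ylim]]) (simp add: normY)

lemma hermYl: "herm Yl"
  unfolding herm_def
proof (intro allI)
  fix x y
  have 1: "(\<lambda>n. cinner (Y n x) y) \<longlonglongrightarrow> cinner (Yl x) y"
    by (rule bounded_linear.tendsto[OF bl_cinner_left Ylim])
  have 2: "(\<lambda>n. cinner x (Y n y)) \<longlonglongrightarrow> cinner x (Yl y)"
    by (rule bounded_linear.tendsto[OF bl_cinner_right Ylim])
  have "(\<lambda>n. cinner (Y n x) y) = (\<lambda>n. cinner x (Y n y))" using posY by (simp add: hermD)
  thus "cinner (Yl x) y = cinner x (Yl y)" using 1 2 LIMSEQ_unique by metis
qed

lemma reYl: "(\<lambda>n. Re (cinner (Y n x) x)) \<longlonglongrightarrow> Re (cinner (Yl x) x)"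
  by (rule tendsto_Re[OF bounded_linear.tendsto[OF bl_cinner_left Ylim]])

lemma reYl_le: "Re (cinner (Yl x) x) \<le> (norm x)^2"
  by (rule LIMSEQ_le_const2[OF reYl]) (simp add: reY_le)

lemma YYl: "(\<lambda>n. Y n (Y n x)) \<longlonglongrightarrow> Yl (Yl x)"
proof -
  have "(\<lambda>n. Y n x - Yl x) \<longlonglongrightarrow> 0" using Ylim[of x] by (simp add: LIM_zero)
  hence "(\<lambda>n. norm (Y n x - Yl x)) \<longlonglongrightarrow> 0" by (simp add: tendsto_norm_zero)
  hence 1: "(\<lambda>n. Y n (Y n x - Yl x)) \<longlonglongrightarrow> 0"
    by (rule Lim_null_comparison[rotated]) (simp add: normY)
  have "(\<lambda>n. Y n (Y n x - Yl x) + Y n (Yl x)) \<longlonglongrightarrow> 0 + Yl (Yl x)"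
    by (rule tendsto_add[OF 1 Ylim])
  thus ?thesis by (simp add: clin_diff[OF clinY])
qed

lemma Yl_fix: "Yl x = (1/2) *\<^sub>R (C x + Yl (Yl x))"
proof -
  have "(\<lambda>n. Y (Suc n) x) \<longlonglongrightarrow> Yl x" by (rule LIMSEQ_Suc[OF Ylim])
  moreover have "(\<lambda>n. Y (Suc n) x) \<longlonglongrightarrow> (1/2) *\<^sub>R (C x + Yl (Yl x))"
    by (simp, intro tendsto_intros YYl)
  ultimately show ?thesis using LIMSEQ_unique by blast
qed

lemma comm_Yl:
  assumes S: "bounded_clinear S" and SC: "\<And>x. S (C x) = C (S x)"
  shows "S (Yl x) = Yl (S x)"
proof -
  have "(\<lambda>n. S (Y n x)) \<longlonglongrightarrow> S (Yl x)" by (rule bounded_linear.tendsto[OF bcl_bl[OF S] Ylim])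
  moreover have "(\<lambda>n. S (Y n x)) = (\<lambda>n. Y n (S x))"
    using comm_K[OF bcl_clin[OF S] cC SC Y_K] by simp
  ultimately show ?thesis using Ylim LIMSEQ_unique by metis
qed

definition R0 :: "'a \<Rightarrow> 'a" where "R0 x = x - Yl x"

lemma posR0: "posop R0"
  unfolding posop_def
proof (intro conjI)
  have "clin R0" unfolding clin_def R0_def
    by (simp add: clin_add[OF clinYl] clin_scaleC[OF clinYl] scaleC_diff_right)
  moreover have "norm (R0 x) \<le> 2 * norm x" for x
    using norm_triangle_ineq4[of x "Yl x"] normYl[of x] by (simp add: R0_def)
  ultimately show "bounded_clinear R0" by (rule clin_bcl)
  show "herm R0" using hermYl by (simp add: herm_def R0_def cinner_diff_left cinner_diff_right)
  show "\<forall>x. 0 \<le> Re (cinner (R0 x) x)" using reYl_le by (simp add: R0_def cinner_diff_left Re_cinner_self)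
qed

lemma R0R0: "R0 (R0 x) = x - C x"
proof -
  have a: "Yl (x - Yl x) = Yl x - Yl (Yl x)" by (rule clin_diff[OF clinYl])
  have b: "Yl (Yl x) = 2 *\<^sub>R Yl x - C x"
  proof -
    have h: "Yl x = (1/2) *\<^sub>R (C x + Yl (Yl x))" by (rule Yl_fix)
    have e: "2 *\<^sub>R Yl x = C x + Yl (Yl x)" using arg_cong[OF h, of "scaleR 2"] by simp
    show ?thesis by (simp add: e)
  qed
  have "R0 (R0 x) = x - Yl x - (Yl x - (2 *\<^sub>R Yl x - C x))" unfolding R0_def a b ..
  also have "\<dots> = x - C x" by (simp add: scaleR_2 algebra_simps)
  finally show ?thesis .
qed

lemma comm_R0:
  assumes S: "bounded_clinear S" and SC: "\<And>x. S (C x) = C (S x)"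
  shows "S (R0 x) = R0 (S x)"
  using comm_Yl[OF S SC] clin_diff[OF bcl_clin[OF S]] by (simp add: R0_def)

end



lemma sqrt_unique_comm:
  fixes S R :: "'a::chilbert_space \<Rightarrow> 'a"
  assumes pS: "posop S" and pR: "posop R" and sq: "\<And>x. S (S x) = R (R x)"
    and cm: "\<And>x. S (R x) = R (S x)"
  shows "S = R"
proof
  fix x
  have cS: "clin S" and cR: "clin R" using pS pR by (auto simp: posop_def intro: bcl_clin)
  have hS: "herm S" and hR: "herm R" using pS pR by (auto simp: posop_def)
  have nS: "0 \<le> Re (cinner (S z) z)" and nR: "0 \<le> Re (cinner (R z) z)" for z
    using pS pR by (auto simp: posop_def)
  define y where "y = S x - R x"
  have "S y + R y = 0"
    by (simp add: y_def clin_diff[OF cS] clin_diff[OF cR] sq cm)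
  hence "Re (cinner (S y) y + cinner (R y) y) = 0"
    using cinner_add_left[of "S y" "R y" y] by simp
  hence "Re (cinner (S y) y) + Re (cinner (R y) y) = 0" by simp
  hence "Re (cinner (S y) y) = 0" "Re (cinner (R y) y) = 0" using nS[of y] nR[of y] by linarith+
  hence Sy: "S y = 0" and Ry: "R y = 0" using posop_kill pS pR by blast+
  have "cinner y y = cinner x (S y) - cinner x (R y)"
    by (subst (1) y_def) (simp add: cinner_diff_left hermD[OF hS] hermD[OF hR])
  hence "cinner y y = 0" by (simp add: Sy Ry)
  hence "y = 0" by (simp add: cinner_self_eq_zero)
  thus "S x = R x" by (simp add: y_def)
qed

lemma posop_scale:
  fixes P :: "'a::complex_inner \<Rightarrow> 'a"
  assumes p: "posop P" and r: "0 \<le> r"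
  shows "posop (\<lambda>x. r *\<^sub>R P x)"
proof -
  have bc: "bounded_clinear P" and h: "herm P" and n: "\<And>x. 0 \<le> Re (cinner (P x) x)"
    using p by (auto simp: posop_def)
  have "clin (\<lambda>x. r *\<^sub>R P x)" by (rule clin_smul[OF bcl_clin[OF bc]])
  moreover have "norm (r *\<^sub>R P x) \<le> (\<bar>r\<bar> * onorm P) * norm x" for x
    using bcl_bound[OF bc, of x] by (simp add: mult.assoc mult_left_mono)
  ultimately have "bounded_clinear (\<lambda>x. r *\<^sub>R P x)" by (rule clin_bcl)
  moreover have "herm (\<lambda>x. r *\<^sub>R P x)" using h by (simp add: herm_def cinner_scaleR_left cinner_scaleR_right)
  moreover have "0 \<le> Re (cinner (r *\<^sub>R P x) x)" for x
    using n[of x] r by (simp add: cinner_scaleR_left del: of_real_inverse)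
  ultimately show ?thesis by (simp add: posop_def)
qed

lemma sqrt_exists:
  fixes B :: "'a::chilbert_space \<Rightarrow> 'a"
  assumes pB: "posop B"
  shows "\<exists>R. posop R \<and> (\<forall>x. R (R x) = B x) \<and>
    (\<forall>S. bounded_clinear S \<longrightarrow> (\<forall>x. S (B x) = B (S x)) \<longrightarrow> (\<forall>x. S (R x) = R (S x)))"
proof -
  have bc: "bounded_clinear B" and h: "herm B" and n: "\<And>x. 0 \<le> Re (cinner (B x) x)"
    using pB by (auto simp: posop_def)
  have cB: "clin B" by (rule bcl_clin[OF bc])
  define K where "K = onorm B + 1"
  have K0: "0 < K" using onorm_pos_le[OF bcl_bl[OF bc]] by (simp add: K_def)
  have Kb: "Re (cinner (B x) x) \<le> K * (norm x)^2" for x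
  proof -
    have "Re (cinner (B x) x) \<le> cmod (cinner (B x) x)" by (rule complex_Re_le_cmod)
    also have "\<dots> \<le> norm (B x) * norm x" by (rule cauchy_schwarz)
    also have "\<dots> \<le> onorm B * norm x * norm x" by (rule mult_right_mono[OF bcl_bound[OF bc]]) simp
    also have "\<dots> \<le> K * (norm x)^2" by (simp add: K_def power2_eq_square algebra_simps)
    finally show ?thesis .
  qed
  define C where "C = (\<lambda>x. x - inverse K *\<^sub>R B x)"
  have reC: "Re (cinner (C x) x) = (norm x)^2 - inverse K * Re (cinner (B x) x)" for x
    by (simp add: C_def cinner_diff_left cinner_scaleR_left Re_cinner_self del: of_real_inverse)
  interpret sqctx C
  proof
    show "clin C" unfolding clin_def C_def
      by (simp add: clin_add[OF cB] clin_scaleC[OF cB] scaleC_diff_right scaleR_scaleC scaleC_scaleC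
          scaleC_add_right mult.commute)
    show "herm C" using h by (simp add: herm_def C_def cinner_diff_left cinner_diff_right
          cinner_scaleR_left cinner_scaleR_right)
    fix x
    show "0 \<le> Re (cinner (C x) x)"
    proof -
      have "inverse K * Re (cinner (B x) x) \<le> (norm x)^2"
        using Kb[of x] K0 by (simp add: field_simps)
      thus ?thesis using K0 by (simp add: reC)
    qed
    show "Re (cinner (C x) x) \<le> (norm x)^2" using n[of x] K0 by (simp add: reC)
  qed
  define R where "R = (\<lambda>x. sqrt K *\<^sub>R R0 x)"
  have pR: "posop R" unfolding R_def by (rule posop_scale[OF posR0]) (use K0 in simp)
  have cR0: "clin R0" using posR0 by (auto simp: posop_def intro: bcl_clin)
  have RR: "R (R x) = B x" for x
  proof -
    have "R (R x) = (sqrt K * sqrt K) *\<^sub>R R0 (R0 x)" by (simp add: R_def clin_scaleR[OF cR0])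
    also have "\<dots> = K *\<^sub>R (x - C x)" using K0 by (simp add: R0R0)
    also have "\<dots> = K *\<^sub>R (inverse K *\<^sub>R B x)" by (simp add: C_def)
    also have "\<dots> = B x" using K0 by simp
    finally show ?thesis .
  qed
  have "\<forall>S. bounded_clinear S \<longrightarrow> (\<forall>x. S (B x) = B (S x)) \<longrightarrow> (\<forall>x. S (R x) = R (S x))"
  proof (intro allI impI)
    fix S x assume S: "bounded_clinear S" and SB: "\<forall>x. S (B x) = B (S x)"
    have cS: "clin S" by (rule bcl_clin[OF S])
    have SC: "S (C z) = C (S z)" for z using SB by (simp add: C_def clin_diff[OF cS] clin_scaleR[OF cS])
    show "S (R x) = R (S x)" using comm_R0[OF S SC] by (simp add: R_def clin_scaleR[OF cS])
  qed
  thus ?thesis using pR RR by blast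
qed

lemma the_sqrt:
  fixes B :: "'a::chilbert_space \<Rightarrow> 'a"
  assumes pB: "posop B"
  shows "posop (THE S. positive_op S \<and> S \<circ> S = B) \<and> (\<forall>x. (THE S. positive_op S \<and> S \<circ> S = B) ((THE S. positive_op S \<and> S \<circ> S = B) x) = B x)"
proof -
  obtain R where pR: "posop R" and RR: "\<And>x. R (R x) = B x"
    and cm: "\<And>S x. bounded_clinear S \<Longrightarrow> (\<forall>x. S (B x) = B (S x)) \<Longrightarrow> S (R x) = R (S x)"
    using sqrt_exists[OF pB] by blast
  have "(THE S. positive_op S \<and> S \<circ> S = B) = R"
  proof (rule the_equality)
    show "positive_op R \<and> R \<circ> R = B" using pR RR by (simp add: positive_op_posop fun_eq_iff)
  next
    fix S assume a: "positive_op S \<and> S \<circ> S = B"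
    hence pS: "posop S" and SS: "\<And>x. S (S x) = B x" by (auto simp: positive_op_posop fun_eq_iff)
    have bS: "bounded_clinear S" using pS by (simp add: posop_def)
    have "\<forall>x. S (B x) = B (S x)" by (simp flip: SS)
    hence "\<And>x. S (R x) = R (S x)" using cm[OF bS] by blast
    thus "S = R" using sqrt_unique_comm[OF pS pR] SS RR by simp
  qed
  thus ?thesis using pR RR by simp
qed

lemma posop_adjcomp:
  fixes T :: "'a::chilbert_space \<Rightarrow> 'a"
  assumes T: "bounded_clinear T"
  shows "posop (adj T \<circ> T)"
proof -
  have aT: "bounded_clinear (adj T)" by (rule adj_bcl[OF T])
  have "clin (adj T \<circ> T)" using bcl_clin[OF T] bcl_clin[OF aT] by (simp add: clin_def)
  moreover have "norm ((adj T \<circ> T) x) \<le> (onorm (adj T) * onorm T) * norm x" for x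
  proof -
    have "norm (adj T (T x)) \<le> onorm (adj T) * norm (T x)" by (rule bcl_bound[OF aT])
    also have "\<dots> \<le> onorm (adj T) * (onorm T * norm x)"
      by (rule mult_left_mono[OF bcl_bound[OF T] onorm_pos_le[OF bcl_bl[OF aT]]])
    finally show ?thesis by (simp add: mult.assoc)
  qed
  ultimately have "bounded_clinear (adj T \<circ> T)" by (rule clin_bcl)
  moreover have "herm (adj T \<circ> T)"
    unfolding herm_def by (simp add: adj_left[OF T] adj_right[OF T])
  moreover have "0 \<le> Re (cinner ((adj T \<circ> T) x) x)" for x
    by (simp add: adj_left[OF T] Re_cinner_self)
  ultimately show ?thesis by (simp add: posop_def)
qed

lemma absop_char:
  fixes T :: "'a::chilbert_space \<Rightarrow> 'a"
  assumes T: "bounded_clinear T"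
  shows "posop (absop T) \<and> (\<forall>x. absop T (absop T x) = adj T (T x))"
  using the_sqrt[OF posop_adjcomp[OF T]] unfolding absop_def by simp



theorem mainTheorem2:
  fixes A :: "'a::chilbert_space \<Rightarrow> 'a"
  assumes "bounded_clinear A"
  shows "1/4 * (numrad (\<lambda>x. absop A x + scaleC \<i> (absop (adj A) x)))\<^sup>2
         + 1/8 * onorm (\<lambda>x. absop A (absop A x) + absop (adj A) (absop (adj A) x))
         + 1/4 * numrad (absop A \<circ> absop (adj A))
         \<le> 1/2 * onorm (\<lambda>x. adj A (A x) + A (adj A x))"
proof -
  note A = assms
  have aA: "bounded_clinear (adj A)" by (rule adj_bcl[OF A])
  define P where "P = absop A"
  define Q where "Q = absop (adj A)"
  have pP: "posop P" and PP: "\<And>x. P (P x) = adj A (A x)"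
    using absop_char[OF A] by (auto simp: P_def)
  have pQ: "posop Q" and QQ: "\<And>x. Q (Q x) = A (adj A x)"
    using absop_char[OF aA] by (auto simp: Q_def adj_adj[OF A])
  have bP: "bounded_clinear P" and hP: "herm P" using pP by (auto simp: posop_def)
  have bQ: "bounded_clinear Q" and hQ: "herm Q" using pQ by (auto simp: posop_def)
  define F where "F = (\<lambda>x. P (P x) + Q (Q x))"
  have FF: "F = (\<lambda>x. adj A (A x) + A (adj A x))" by (simp add: F_def PP QQ fun_eq_iff)
  define N where "N = onorm F"
  have blF: "bounded_linear F" unfolding F_def
    by (rule bounded_linear_add[OF bounded_linear_compose[OF bcl_bl[OF bP] bcl_bl[OF bP]]
          bounded_linear_compose[OF bcl_bl[OF bQ] bcl_bl[OF bQ]]])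
  have N0: "0 \<le> N" unfolding N_def by (rule onorm_pos_le[OF blF])
  have key: "(norm (P x))^2 + (norm (Q x))^2 \<le> N * (norm x)^2" for x
  proof -
    have "(norm (P x))^2 + (norm (Q x))^2 = Re (cinner (F x) x)"
      using hermD[OF hP, of "P x" x] hermD[OF hQ, of "Q x" x]
      by (simp add: F_def cinner_add_left Re_cinner_self)
    also have "\<dots> \<le> cmod (cinner (F x) x)" by (rule complex_Re_le_cmod)
    also have "\<dots> \<le> norm (F x) * norm x" by (rule cauchy_schwarz)
    also have "\<dots> \<le> N * norm x * norm x" unfolding N_def by (rule mult_right_mono[OF onorm[OF blF]]) simp
    finally show ?thesis by (simp add: power2_eq_square mult.assoc)
  qed
  define G where "G = (\<lambda>x. P x + scaleC \<i> (Q x))"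
  have bG: "cmod (cinner (G x) x) / (norm x)^2 \<le> sqrt N" for x
  proof (cases "x = 0")
    case True thus ?thesis using N0 by simp
  next
    case False
    define p where "p = cinner (P x) x"
    define q where "q = cinner (Q x) x"
    have ip: "Im p = 0" and iq: "Im q = 0" using herm_real[OF hP] herm_real[OF hQ] by (auto simp: p_def q_def)
    have g: "cinner (G x) x = p + \<i> * q" by (simp add: G_def p_def q_def cinner_add_left cinner_scaleC_left)
    have "(cmod (cinner (G x) x))^2 = (Re p)^2 + (Re q)^2" by (simp add: g cmod_power2 ip iq)
    also have "\<dots> \<le> (norm (P x) * norm x)^2 + (norm (Q x) * norm x)^2"
    proof -
      have "\<bar>Re p\<bar> \<le> norm (P x) * norm x" using abs_Re_le_cmod[of p] cauchy_schwarz[of "P x" x] by (simp add: p_def)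
      moreover have "\<bar>Re q\<bar> \<le> norm (Q x) * norm x" using abs_Re_le_cmod[of q] cauchy_schwarz[of "Q x" x] by (simp add: q_def)
      ultimately show ?thesis
        using power_mono[of "\<bar>Re p\<bar>" "norm (P x) * norm x" 2] power_mono[of "\<bar>Re q\<bar>" "norm (Q x) * norm x" 2]
        by simp
    qed
    also have "\<dots> = ((norm (P x))^2 + (norm (Q x))^2) * (norm x)^2" by (simp add: algebra_simps power_mult_distrib)
    also have "\<dots> \<le> N * (norm x)^2 * (norm x)^2" by (rule mult_right_mono[OF key]) simp
    also have "\<dots> = (sqrt N * (norm x)^2)^2" using N0 by (simp add: power_mult_distrib power2_eq_square)
    finally have "cmod (cinner (G x) x) \<le> sqrt N * (norm x)^2"
      by (rule power2_le_imp_le) (simp add: N0)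
    thus ?thesis using False by (simp add: divide_le_eq)
  qed
  have bddG: "bdd_above (range (\<lambda>x. cmod (cinner (G x) x) / (norm x)^2))"
    using bG by (intro bdd_aboveI2) blast
  have w1: "numrad G \<le> sqrt N" unfolding numrad_def by (rule cSUP_least) (auto intro: bG)
  have w1': "0 \<le> numrad G" unfolding numrad_def using cSUP_upper[OF UNIV_I bddG, of 0] by simp
  have w1sq: "(numrad G)^2 \<le> N" using power_mono[OF w1 w1', of 2] N0 by simp
  have bH: "cmod (cinner ((P \<circ> Q) x) x) / (norm x)^2 \<le> N / 2" for x
  proof (cases "x = 0")
    case True thus ?thesis using N0 by simp
  next
    case False
    have "cmod (cinner ((P \<circ> Q) x) x) = cmod (cinner (Q x) (P x))" by (simp add: hermD[OF hP])
    also have "\<dots> \<le> norm (Q x) * norm (P x)" by (rule cauchy_schwarz)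
    also have "\<dots> \<le> ((norm (P x))^2 + (norm (Q x))^2) / 2"
      using sum_squares_bound[of "norm (P x)" "norm (Q x)"] by (simp add: algebra_simps)
    also have "\<dots> \<le> N * (norm x)^2 / 2" using key[of x] by simp
    finally show ?thesis using False by (simp add: field_simps)
  qed
  have w2: "numrad (P \<circ> Q) \<le> N / 2" unfolding numrad_def
  proof (rule cSUP_least)
    fix x show "cmod (cinner ((P \<circ> Q) x) x) / (norm x)^2 \<le> N / 2" by (rule bH)
  qed simp
  have "1/4 * (numrad G)^2 + 1/8 * N + 1/4 * numrad (P \<circ> Q) \<le> 1/2 * N"
    using w1sq w2 by simp
  thus ?thesis by (simp add: G_def P_def Q_def N_def FF[symmetric] F_def)
qed


end
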